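(* Let $U_1,U_2$ be regular trees of valence $4$. Suppose there is a torsion-free irreducible lattice $L_0$ acting cocompactly on $U_1\times U_2$ such that $L_0$ is residually finite. Then there is a torsion-free irreducible lattice $L$ (a finite index subgroup of $L_0$) acting properly and cocompactly on $U_1\times U_2$ without exchanging the two factors, and a vertex $z_0\in U_2$, such that, with $U_{1,z_0}$ the quotient of $U_1\times\{z_0\}$ by the stabilizer in $L$ of $U_1\times\{z_0\}$: each edge of $U_{1,z_0}$ is embedded, and the edges of $U_{1,z_0}$ can be labeled by elements of $\{w_1,w_2,w_3,w_4\}$ so that distinct edges incident to a common vertex have different labels.
   Context: Irreducible: no finite index subgroup is a direct product of two infinite groups. A lattice here acts properly discontinuously by tree-product automorphisms. *)

theory Defs
  imports "HOL-Algebra.Algebra"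
begin

definition walk :: "('v \<Rightarrow> 'v \<Rightarrow> bool) \<Rightarrow> 'v list \<Rightarrow> bool" where
  "walk E xs \<longleftrightarrow> xs \<noteq> [] \<and> (\<forall>i. Suc i < length xs \<longrightarrow> E (xs ! i) (xs ! Suc i))"

definition reduced :: "'v list \<Rightarrow> bool" where
  "reduced xs \<longleftrightarrow> (\<forall>i. i + 2 < length xs \<longrightarrow> xs ! i \<noteq> xs ! (i + 2))"

definition is_tree :: "'v set \<Rightarrow> ('v \<Rightarrow> 'v \<Rightarrow> bool) \<Rightarrow> bool" where
  "is_tree V E \<longleftrightarrow> V \<noteq> {} \<and> (\<forall>x y. E x y \<longrightarrow> x \<in> V \<and> y \<in> V) \<and>
     (\<forall>x y. E x y \<longrightarrow> E y x) \<and> (\<forall>x. \<not> E x x) \<and>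
     (\<forall>u\<in>V. \<forall>v\<in>V. \<exists>!xs. walk E xs \<and> reduced xs \<and> hd xs = u \<and> last xs = v)"

definition regular_tree :: "'v set \<Rightarrow> ('v \<Rightarrow> 'v \<Rightarrow> bool) \<Rightarrow> nat \<Rightarrow> bool" where
  "regular_tree V E k \<longleftrightarrow> is_tree V E \<and> (\<forall>v\<in>V. finite {w. E v w} \<and> card {w. E v w} = k)"

definition graph_iso :: "'v set \<Rightarrow> ('v \<Rightarrow> 'v \<Rightarrow> bool) \<Rightarrow> 'v set \<Rightarrow> ('v \<Rightarrow> 'v \<Rightarrow> bool)
    \<Rightarrow> ('v \<Rightarrow> 'v) \<Rightarrow> bool" where
  "graph_iso VA EA VB EB h \<longleftrightarrow> bij_betw h VA VB \<and>
     (\<forall>x\<in>VA. \<forall>y\<in>VA. EA x y \<longleftrightarrow> EB (h x) (h y))"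

definition factor_preserving ::
  "'v set \<Rightarrow> ('v \<Rightarrow> 'v \<Rightarrow> bool) \<Rightarrow> 'v set \<Rightarrow> ('v \<Rightarrow> 'v \<Rightarrow> bool) \<Rightarrow> ('v \<times> 'v \<Rightarrow> 'v \<times> 'v) \<Rightarrow> bool" where
  "factor_preserving V1 E1 V2 E2 f \<longleftrightarrow>
     (\<exists>g1 g2. graph_iso V1 E1 V1 E1 g1 \<and> graph_iso V2 E2 V2 E2 g2 \<and>
        (\<forall>x\<in>V1. \<forall>y\<in>V2. f (x, y) = (g1 x, g2 y)))"

definition factor_exchanging ::
  "'v set \<Rightarrow> ('v \<Rightarrow> 'v \<Rightarrow> bool) \<Rightarrow> 'v set \<Rightarrow> ('v \<Rightarrow> 'v \<Rightarrow> bool) \<Rightarrow> ('v \<times> 'v \<Rightarrow> 'v \<times> 'v) \<Rightarrow> bool" where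
  "factor_exchanging V1 E1 V2 E2 f \<longleftrightarrow>
     (\<exists>h1 h2. graph_iso V2 E2 V1 E1 h1 \<and> graph_iso V1 E1 V2 E2 h2 \<and>
        (\<forall>x\<in>V1. \<forall>y\<in>V2. f (x, y) = (h1 y, h2 x)))"

definition prod_aut ::
  "'v set \<Rightarrow> ('v \<Rightarrow> 'v \<Rightarrow> bool) \<Rightarrow> 'v set \<Rightarrow> ('v \<Rightarrow> 'v \<Rightarrow> bool) \<Rightarrow> ('v \<times> 'v \<Rightarrow> 'v \<times> 'v) \<Rightarrow> bool" where
  "prod_aut V1 E1 V2 E2 f \<longleftrightarrow>
     factor_preserving V1 E1 V2 E2 f \<or> factor_exchanging V1 E1 V2 E2 f"

definition TPG :: "'v set \<Rightarrow> 'v set \<Rightarrow> ('v \<times> 'v \<Rightarrow> 'v \<times> 'v) set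
    \<Rightarrow> ('v \<times> 'v \<Rightarrow> 'v \<times> 'v) monoid" where
  "TPG V1 V2 L = (BijGroup (V1 \<times> V2)) \<lparr>carrier := L\<rparr>"

text \<open>A lattice: a group of tree-product automorphisms acting properly discontinuously
(for every finite set K of vertices only finitely many g satisfy gK \<inter> K \<noteq> {}).\<close>
definition tp_lattice ::
  "'v set \<Rightarrow> ('v \<Rightarrow> 'v \<Rightarrow> bool) \<Rightarrow> 'v set \<Rightarrow> ('v \<Rightarrow> 'v \<Rightarrow> bool) \<Rightarrow> ('v \<times> 'v \<Rightarrow> 'v \<times> 'v) set \<Rightarrow> bool" where
  "tp_lattice V1 E1 V2 E2 L \<longleftrightarrow>
     subgroup L (BijGroup (V1 \<times> V2)) \<and> (\<forall>f\<in>L. prod_aut V1 E1 V2 E2 f) \<and>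
     (\<forall>K. K \<subseteq> V1 \<times> V2 \<and> finite K \<longrightarrow> finite {g\<in>L. g ` K \<inter> K \<noteq> {}})"

definition cocompact :: "'v set \<Rightarrow> 'v set \<Rightarrow> ('v \<times> 'v \<Rightarrow> 'v \<times> 'v) set \<Rightarrow> bool" where
  "cocompact V1 V2 L \<longleftrightarrow> (\<exists>K. finite K \<and> K \<subseteq> V1 \<times> V2 \<and> V1 \<times> V2 = (\<Union>g\<in>L. g ` K))"

definition finite_index :: "('a, 'b) monoid_scheme \<Rightarrow> 'a set \<Rightarrow> bool" where
  "finite_index G H \<longleftrightarrow> subgroup H G \<and> finite (rcosets\<^bsub>G\<^esub> H)"

definition torsion_free :: "('a, 'b) monoid_scheme \<Rightarrow> bool" where
  "torsion_free G \<longleftrightarrow> (\<forall>g\<in>carrier G. g \<noteq> \<one>\<^bsub>G\<^esub> \<longrightarrow> (\<forall>n::nat. n > 0 \<longrightarrow> g [^]\<^bsub>G\<^esub> n \<noteq> \<one>\<^bsub>G\<^esub>))"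

definition residually_finite :: "('a, 'b) monoid_scheme \<Rightarrow> bool" where
  "residually_finite G \<longleftrightarrow> (\<forall>g\<in>carrier G. g \<noteq> \<one>\<^bsub>G\<^esub> \<longrightarrow>
      (\<exists>N. normal N G \<and> finite (rcosets\<^bsub>G\<^esub> N) \<and> g \<notin> N))"

definition internal_direct_product :: "('a, 'b) monoid_scheme \<Rightarrow> 'a set \<Rightarrow> 'a set \<Rightarrow> 'a set \<Rightarrow> bool" where
  "internal_direct_product G H A B \<longleftrightarrow> subgroup A G \<and> subgroup B G \<and> A \<subseteq> H \<and> B \<subseteq> H \<and>
     (\<forall>a\<in>A. \<forall>b\<in>B. a \<otimes>\<^bsub>G\<^esub> b = b \<otimes>\<^bsub>G\<^esub> a) \<and> A \<inter> B = {\<one>\<^bsub>G\<^esub>} \<and> A <#>\<^bsub>G\<^esub> B = H"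

definition irreducible_grp :: "('a, 'b) monoid_scheme \<Rightarrow> bool" where
  "irreducible_grp G \<longleftrightarrow> \<not> (\<exists>H A B. finite_index G H \<and> internal_direct_product G H A B \<and>
        infinite A \<and> infinite B)"

definition slice_stab :: "'v set \<Rightarrow> ('v \<times> 'v \<Rightarrow> 'v \<times> 'v) set \<Rightarrow> 'v \<Rightarrow> ('v \<times> 'v \<Rightarrow> 'v \<times> 'v) set" where
  "slice_stab V1 L z0 = {g\<in>L. g ` (V1 \<times> {z0}) = V1 \<times> {z0}}"

definition slice_orbit :: "('v \<times> 'v \<Rightarrow> 'v \<times> 'v) set \<Rightarrow> 'v \<Rightarrow> 'v \<Rightarrow> 'v set" where
  "slice_orbit S z0 x = {fst (g (x, z0)) | g. g \<in> S}"

definition slice_edge_orbit :: "('v \<times> 'v \<Rightarrow> 'v \<times> 'v) set \<Rightarrow> 'v \<Rightarrow> 'v \<Rightarrow> 'v \<Rightarrow> 'v set set" where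
  "slice_edge_orbit S z0 x y = {{fst (g (x, z0)), fst (g (y, z0))} | g. g \<in> S}"

definition quotient_edges :: "'v set \<Rightarrow> ('v \<Rightarrow> 'v \<Rightarrow> bool) \<Rightarrow> ('v \<times> 'v \<Rightarrow> 'v \<times> 'v) set \<Rightarrow> 'v \<Rightarrow> 'v set set set" where
  "quotient_edges V1 E1 S z0 = {slice_edge_orbit S z0 x y | x y. x \<in> V1 \<and> y \<in> V1 \<and> E1 x y}"

definition share_vertex :: "('v \<times> 'v \<Rightarrow> 'v \<times> 'v) set \<Rightarrow> 'v \<Rightarrow> 'v set set \<Rightarrow> 'v set set \<Rightarrow> bool" where
  "share_vertex S z0 e1 e2 \<longleftrightarrow> (\<exists>a\<in>\<Union>e1. \<exists>b\<in>\<Union>e2. slice_orbit S z0 a = slice_orbit S z0 b)"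

datatype wlabel = w1 | w2 | w3 | w4

end

theory Submission
  imports Defs
begin

lemma rcosets_upd:
  fixes G :: "('a, 'b) monoid_scheme" (structure)
  shows "rcosets\<^bsub>G\<lparr>carrier := L\<rparr>\<^esub> H = {H #> a | a. a \<in> L}"
  by (auto simp: RCOSETS_def r_coset_def)

lemma reps_exist:
  fixes G :: "('a, 'b) monoid_scheme" (structure)
  assumes G: "group G" and L: "subgroup L G" and H: "subgroup H G" and HL: "H \<subseteq> L"
    and fin: "finite {H #> a | a. a \<in> L}"
  shows "\<exists>R. finite R \<and> R \<subseteq> L \<and> (\<forall>a\<in>L. \<exists>h\<in>H. \<exists>b\<in>R. a = h \<otimes> b)"
proof -
  define C where "C = {H #> a | a. a \<in> L}"
  define rep where "rep Xc = (SOME b. b \<in> L \<and> Xc = H #> b)" for Xc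
  have rep: "rep Xc \<in> L \<and> Xc = H #> rep Xc" if xc: "Xc \<in> C" for Xc
  proof -
    obtain a where "a \<in> L" "Xc = H #> a" using xc unfolding C_def by blast
    then have "\<exists>b. b \<in> L \<and> Xc = H #> b" by blast
    then show ?thesis unfolding rep_def by (rule someI_ex)
  qed
  have repL: "rep Xc \<in> L" if xc: "Xc \<in> C" for Xc using rep[OF xc] by (rule conjunct1)
  show ?thesis
  proof (rule exI[of _ "rep ` C"], intro conjI ballI)
    show "finite (rep ` C)" using fin C_def by simp
    show "rep ` C \<subseteq> L" using repL by blast
    fix a assume a: "a \<in> L"
    have aG: "a \<in> carrier G" using subgroup.mem_carrier[OF L a] .
    have Xc: "H #> a \<in> C" using a C_def by auto
    have e: "H #> a = H #> rep (H #> a)" using rep[OF Xc] by (rule conjunct2)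
    have m: "a \<in> H #> a" using group.rcos_self[OF G aG H] .
    have "a \<in> H #> rep (H #> a)" using e m by (rule subst)
    then obtain h where "h \<in> H" "a = h \<otimes> rep (H #> a)" unfolding r_coset_def by blast
    then show "\<exists>h\<in>H. \<exists>b\<in>rep ` C. a = h \<otimes> b" using Xc by blast
  qed
qed

lemma index_trans:
  fixes G :: "('a, 'b) monoid_scheme" (structure)
  assumes G: "group G" and L: "subgroup L G" and H: "subgroup H G" and HL: "H \<subseteq> L"
    and H': "subgroup H' G" and H'H: "H' \<subseteq> H"
    and fin1: "finite {H #> a | a. a \<in> L}"
    and fin2: "finite {H' #> a | a. a \<in> H}"
  shows "finite {H' #> a | a. a \<in> L}"
proof -
  obtain R where R: "finite R" "R \<subseteq> L" "\<forall>a\<in>L. \<exists>h\<in>H. \<exists>b\<in>R. a = h \<otimes> b"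
    using reps_exist[OF G L H HL fin1] by blast
  obtain R' where R': "finite R'" "R' \<subseteq> H" "\<forall>a\<in>H. \<exists>h\<in>H'. \<exists>b\<in>R'. a = h \<otimes> b"
    using reps_exist[OF G H H' H'H fin2] by blast
  have "{H' #> a | a. a \<in> L} \<subseteq> (\<lambda>(b',b). H' #> (b' \<otimes> b)) ` (R' \<times> R)"
  proof
    fix Xc assume "Xc \<in> {H' #> a | a. a \<in> L}"
    then obtain a where a: "a \<in> L" "Xc = H' #> a" by blast
    obtain h b where hb: "h \<in> H" "b \<in> R" "a = h \<otimes> b" using R(3) a(1) by blast
    obtain h' b' where hb': "h' \<in> H'" "b' \<in> R'" "h = h' \<otimes> b'" using R'(3) hb(1) by blast
    have c: "h' \<in> carrier G" "b' \<in> carrier G" "b \<in> carrier G"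
      using subgroup.mem_carrier[OF H' hb'(1)] subgroup.mem_carrier[OF H subsetD[OF R'(2) hb'(2)]]
        subgroup.mem_carrier[OF L subsetD[OF R(2) hb(2)]] by auto
    have "Xc = H' #> (h' \<otimes> (b' \<otimes> b))"
      using a(2) hb(3) hb'(3) c monoid.m_assoc[OF group.is_monoid[OF G]] by simp
    also have "\<dots> = (H' #> h') #> (b' \<otimes> b)"
      using c group.coset_mult_assoc[OF G, of H' h' "b' \<otimes> b"] subgroup.subset[OF H']
      by (simp add: group.is_monoid[OF G] monoid.m_closed)
    also have "H' #> h' = H'" using subgroup.rcos_const[OF H' G hb'(1)] .
    finally have "Xc = (\<lambda>(b',b). H' #> (b' \<otimes> b)) (b', b)" by simp
    moreover have "(b', b) \<in> R' \<times> R" using hb'(2) hb(2) by (rule SigmaI)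
    ultimately show "Xc \<in> (\<lambda>(b',b). H' #> (b' \<otimes> b)) ` (R' \<times> R)" by (rule image_eqI)
  qed
  then show ?thesis using finite_subset finite_imageI[OF finite_cartesian_product[OF R'(1) R(1)]] by blast
qed

lemma walk_Cons2: "walk E (a # b # xs) \<longleftrightarrow> E a b \<and> walk E (b # xs)"
  unfolding walk_def
  by (auto simp: nth_Cons split: nat.splits)

lemma walk_inv: "walk E xs \<Longrightarrow> (\<And>x y. E x y \<Longrightarrow> Q x = Q y) \<Longrightarrow> Q (hd xs) = Q (last xs)"
proof (induction xs rule: induct_list012)
  case 1 then show ?case by (simp add: walk_def)
next
  case (2 x) then show ?case by simp
next
  case (3 x y zs)
  then have "E x y" "walk E (y # zs)" by (simp_all add: walk_Cons2)
  then have "Q (hd (y # zs)) = Q (last (y # zs))" using 3 by blast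
  then show ?case using 3(4)[OF \<open>E x y\<close>] by simp
qed


lemma tree_ne: "is_tree V E \<Longrightarrow> V \<noteq> {}" unfolding is_tree_def by (elim conjE)
lemma tree_edge: "is_tree V E \<Longrightarrow> E x y \<Longrightarrow> x \<in> V \<and> y \<in> V"
  unfolding is_tree_def by (elim conjE) (erule allE, erule allE, erule mp)
lemma tree_ex1: assumes "is_tree V E" "u \<in> V" "v \<in> V"
  shows "\<exists>!xs. walk E xs \<and> reduced xs \<and> hd xs = u \<and> last xs = v"
proof -
  have "\<forall>u\<in>V. \<forall>v\<in>V. \<exists>!xs. walk E xs \<and> reduced xs \<and> hd xs = u \<and> last xs = v"
    using assms(1) unfolding is_tree_def by (elim conjE)
  then show ?thesis using assms(2,3) by (elim ballE) auto
qed

lemma tree_inv: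
  assumes "is_tree V E" "\<And>x y. E x y \<Longrightarrow> Q x = Q y" "u \<in> V" "v \<in> V"
  shows "Q u = Q v"
proof -
  obtain xs where "walk E xs" "hd xs = u" "last xs = v"
    using tree_ex1[OF assms(1,3,4)] by auto
  then show ?thesis using walk_inv[of E xs Q] assms(2) by simp
qed

lemma walk_butlast: assumes "walk E w" "length w \<ge> 2" shows "walk E (butlast w)"
  unfolding walk_def
proof (intro conjI allI impI)
  show "butlast w \<noteq> []" using assms(2) by (cases w rule: rev_cases) auto
  fix i assume "Suc i < length (butlast w)"
  then have i: "Suc i < length w - 1" by simp
  then have "E (w ! i) (w ! Suc i)" using assms(1) unfolding walk_def by auto
  then show "E (butlast w ! i) (butlast w ! Suc i)" using i by (simp add: nth_butlast)
qed

lemma reduced_butlast: assumes "reduced w" shows "reduced (butlast w)"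
  unfolding reduced_def
proof (intro allI impI)
  fix i assume "i + 2 < length (butlast w)"
  then have i: "i + 2 < length w - 1" by simp
  then have "w ! i \<noteq> w ! (i + 2)" using assms unfolding reduced_def by auto
  then show "butlast w ! i \<noteq> butlast w ! (i + 2)" using i by (simp add: nth_butlast)
qed

lemma hd_butlast2: assumes "length w \<ge> 2" shows "hd (butlast w) = hd w"
  using assms by (cases w) auto

lemma last_butlast2: assumes "length w \<ge> 2" shows "last (butlast w) = w ! (length w - 2)"
proof -
  have ne: "butlast w \<noteq> []" using assms by (cases w rule: rev_cases) auto
  have "last (butlast w) = butlast w ! (length (butlast w) - 1)" using ne by (rule last_conv_nth)
  also have "\<dots> = w ! (length w - 2)" using assms by (simp add: nth_butlast numeral_2_eq_2)
  finally show ?thesis .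
qed

lemma walk_snoc: assumes "walk E w" "E (last w) y" shows "walk E (w @ [y])"
  unfolding walk_def
proof (intro conjI allI impI)
  show "w @ [y] \<noteq> []" by simp
  fix i assume i: "Suc i < length (w @ [y])"
  have ne: "w \<noteq> []" using assms(1) unfolding walk_def by simp
  show "E ((w @ [y]) ! i) ((w @ [y]) ! Suc i)"
  proof (cases "Suc i < length w")
    case True
    then show ?thesis using assms(1) unfolding walk_def by (simp add: nth_append)
  next
    case False
    then have "Suc i = length w" using i by simp
    then have "i = length w - 1" by simp
    then show ?thesis using assms(2) ne \<open>Suc i = length w\<close> by (simp add: nth_append last_conv_nth)
  qed
qed

lemma reduced_snoc: assumes "reduced w" "length w \<ge> 2 \<longrightarrow> w ! (length w - 2) \<noteq> y"
  shows "reduced (w @ [y])"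
  unfolding reduced_def
proof (intro allI impI)
  fix i assume i: "i + 2 < length (w @ [y])"
  show "(w @ [y]) ! i \<noteq> (w @ [y]) ! (i + 2)"
  proof (cases "i + 2 < length w")
    case True
    then show ?thesis using assms(1) unfolding reduced_def by (simp add: nth_append)
  next
    case False
    then have e: "i + 2 = length w" using i by simp
    then have "i = length w - 2" "length w \<ge> 2" by simp_all
    then show ?thesis using assms(2) e by (simp add: nth_append)
  qed
qed

lemma tree_bipartite:
  assumes T: "is_tree V E"
  shows "\<exists>c. \<forall>x y. E x y \<longrightarrow> (c x :: bool) \<noteq> c y"
proof -
  obtain b where b: "b \<in> V" using tree_ne[OF T] by auto
  define P where "P x xs \<longleftrightarrow> walk E xs \<and> reduced xs \<and> hd xs = b \<and> last xs = x" for x xs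
  have ex1: "\<exists>!xs. P x xs" if "x \<in> V" for x
    using tree_ex1[OF T b that] unfolding P_def .
  define W where "W x = (THE xs. P x xs)" for x
  have PW: "P x (W x)" if "x \<in> V" for x unfolding W_def using ex1[OF that] by (rule theI')
  have uniq: "W x = xs" if "x \<in> V" "P x xs" for x xs
    unfolding W_def using ex1[OF that(1)] that(2) by (rule the1_equality)
  define c where "c x = even (length (W x))" for x
  have "c x \<noteq> c y" if e: "E x y" for x y
  proof -
    have xy: "x \<in> V" "y \<in> V" using tree_edge[OF T e] by auto
    define w where "w = W x"
    have w: "walk E w" "reduced w" "hd w = b" "last w = x" using PW[OF xy(1)] unfolding P_def w_def by auto
    show ?thesis
    proof (cases "length w \<ge> 2 \<and> w ! (length w - 2) = y")
      case True
      have "P y (butlast w)" unfolding P_def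
        using walk_butlast[OF w(1)] reduced_butlast[OF w(2)] hd_butlast2[of w] last_butlast2[of w] True w(3)
        by simp
      then have "W y = butlast w" using uniq xy(2) by blast
      then show ?thesis unfolding c_def w_def[symmetric] using True by auto
    next
      case False
      have "P y (w @ [y])" unfolding P_def
      proof (intro conjI)
        show "walk E (w @ [y])" using walk_snoc[OF w(1)] w(4) e by simp
        show "reduced (w @ [y])" using reduced_snoc[OF w(2)] False by blast
        have "w \<noteq> []" using w(1) unfolding walk_def by simp
        then show "hd (w @ [y]) = b" using w(3) by simp
      qed simp
      then have "W y = w @ [y]" using uniq xy(2) by blast
      then show ?thesis unfolding c_def w_def[symmetric] by auto
    qed
  qed
  then have "\<forall>x y. E x y \<longrightarrow> c x \<noteq> c y" by blast
  then show ?thesis by blast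
qed

lemma iso_parity:
  assumes iso: "graph_iso VA EA VB EB h" and T: "is_tree VA EA"
    and cA: "\<forall>x y. EA x y \<longrightarrow> (cA x :: bool) \<noteq> cA y" and cB: "\<forall>x y. EB x y \<longrightarrow> (cB x :: bool) \<noteq> cB y"
    and x: "x \<in> VA" "x' \<in> VA" and eq: "cA x = cA x'"
  shows "cB (h x) = cB (h x')"
proof -
  have "(cB (h x) = cA x) = (cB (h x') = cA x')"
  proof (rule tree_inv[OF T _ x])
    fix u v assume e: "EA u v"
    then have uv: "u \<in> VA" "v \<in> VA" using tree_edge[OF T e] by auto
    have "\<forall>x\<in>VA. \<forall>y\<in>VA. EA x y \<longleftrightarrow> EB (h x) (h y)" using iso unfolding graph_iso_def by (elim conjE)
    then have "EB (h u) (h v)" using uv e by auto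
    then show "(cB (h u) = cA u) = (cB (h v) = cA v)" using cA cB e by blast
  qed
  then show ?thesis using eq by blast
qed

inductive_set kchain :: "('e \<Rightarrow> 'a) \<Rightarrow> ('e \<Rightarrow> 'b) \<Rightarrow> 'e set \<Rightarrow> ('e \<Rightarrow> nat) \<Rightarrow> nat \<Rightarrow> nat \<Rightarrow> 'b \<Rightarrow> 'e set"
  for l r F col a b v0 where
  kbase: "f \<in> F \<Longrightarrow> col f = a \<Longrightarrow> r f = v0 \<Longrightarrow> f \<in> kchain l r F col a b v0"
| kstepA: "g \<in> kchain l r F col a b v0 \<Longrightarrow> col g = a \<Longrightarrow> f \<in> F \<Longrightarrow> col f = b \<Longrightarrow> l f = l g
     \<Longrightarrow> f \<in> kchain l r F col a b v0"
| kstepB: "g \<in> kchain l r F col a b v0 \<Longrightarrow> col g = b \<Longrightarrow> f \<in> F \<Longrightarrow> col f = a \<Longrightarrow> r f = r g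
     \<Longrightarrow> f \<in> kchain l r F col a b v0"

lemma kchain_props:
  assumes "f \<in> kchain l r F col a b v0"
  shows "f \<in> F \<and> (col f = a \<or> col f = b) \<and>
    (col f = a \<longrightarrow> r f = v0 \<or> (\<exists>g\<in>kchain l r F col a b v0. col g = b \<and> r g = r f)) \<and>
    (col f = b \<longrightarrow> col f = a \<or> (\<exists>g\<in>kchain l r F col a b v0. col g = a \<and> l g = l f))"
  using assms
proof (induction rule: kchain.induct)
  case (kbase f) then show ?case by simp
next
  case (kstepA g f) then show ?case by (metis kchain.kstepA)
next
  case (kstepB g f) then show ?case by (metis kchain.kstepB)
qed

lemma missing_color:
  assumes "finite S" "card S < k" shows "\<exists>a<k. a \<notin> S"
proof (rule ccontr)
  assume "\<not> (\<exists>a<k. a \<notin> S)"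
  then have "{..<k} \<subseteq> S" by auto
  then have "card {..<k} \<le> card S" using assms(1) card_mono by blast
  then show False using assms(2) by simp
qed

definition proper_col :: "('e \<Rightarrow> 'a) \<Rightarrow> ('e \<Rightarrow> 'b) \<Rightarrow> nat \<Rightarrow> 'e set \<Rightarrow> ('e \<Rightarrow> nat) \<Rightarrow> bool" where
  "proper_col l r k F col \<longleftrightarrow> (\<forall>e\<in>F. col e < k) \<and>
     (\<forall>e\<in>F. \<forall>e'\<in>F. e \<noteq> e' \<and> (l e = l e' \<or> r e = r e') \<longrightarrow> col e \<noteq> col e')"

lemma konig_step:
  fixes l :: "'e \<Rightarrow> 'a" and r :: "'e \<Rightarrow> 'b"
  assumes fin: "finite F" and eF: "e \<notin> F"
    and dl: "card {f\<in>insert e F. l f = l e} \<le> k" and dr: "card {f\<in>insert e F. r f = r e} \<le> k"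
    and P: "proper_col l r k F col"
  shows "\<exists>col'. proper_col l r k (insert e F) col'"
proof -
  have lt: "\<forall>f\<in>F. col f < k" and pr: "\<And>f f'. f \<in> F \<Longrightarrow> f' \<in> F \<Longrightarrow> f \<noteq> f' \<Longrightarrow> l f = l f' \<or> r f = r f' \<Longrightarrow> col f \<noteq> col f'"
    using P unfolding proper_col_def by blast+
  have "{f\<in>insert e F. l f = l e} = insert e {f\<in>F. l f = l e}" by auto
  then have cl: "card {f\<in>F. l f = l e} < k" using dl eF fin by simp
  have "{f\<in>insert e F. r f = r e} = insert e {f\<in>F. r f = r e}" by auto
  then have cr: "card {f\<in>F. r f = r e} < k" using dr eF fin by simp
  have finl: "finite (col ` {f\<in>F. l f = l e})" using fin by simp
  have "card (col ` {f\<in>F. l f = l e}) \<le> card {f\<in>F. l f = l e}" using fin by (intro card_image_le) simp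
  then have "card (col ` {f\<in>F. l f = l e}) < k" using cl by linarith
  then obtain a where a: "a < k" "a \<notin> col ` {f\<in>F. l f = l e}" using missing_color[OF finl] by blast
  have finr: "finite (col ` {f\<in>F. r f = r e})" using fin by simp
  have "card (col ` {f\<in>F. r f = r e}) \<le> card {f\<in>F. r f = r e}" using fin by (intro card_image_le) simp
  then have "card (col ` {f\<in>F. r f = r e}) < k" using cr by linarith
  then obtain b where b: "b < k" "b \<notin> col ` {f\<in>F. r f = r e}" using missing_color[OF finr] by blast
  have amiss: "\<And>f. f \<in> F \<Longrightarrow> l f = l e \<Longrightarrow> col f \<noteq> a" using a(2) by blast
  have bmiss: "\<And>f. f \<in> F \<Longrightarrow> r f = r e \<Longrightarrow> col f \<noteq> b" using b(2) by blast
  show ?thesis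
  proof (cases "a = b")
    case True
    define col' where "col' = col(e := a)"
    have "proper_col l r k (insert e F) col'"
      unfolding proper_col_def col'_def
    proof (intro conjI ballI impI)
      fix f assume "f \<in> insert e F" then show "(col(e := a)) f < k" using lt a(1) by auto
    next
      fix f f' assume f: "f \<in> insert e F" "f' \<in> insert e F" and h: "f \<noteq> f' \<and> (l f = l f' \<or> r f = r f')"
      show "(col(e := a)) f \<noteq> (col(e := a)) f'"
      proof (cases "f = e")
        case True
        then have "f' \<in> F" "f' \<noteq> e" using f h eF by auto
        then show ?thesis using True h amiss bmiss \<open>a = b\<close> by fastforce
      next
        case False
        note fe = False
        show ?thesis
        proof (cases "f' = e")
          case True
          then have "f \<in> F" using f fe by auto
          then show ?thesis using True fe h amiss bmiss \<open>a = b\<close> by fastforce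
        next
          case False
          then show ?thesis using fe f h pr by auto
        qed
      qed
    qed
    then show ?thesis by blast
  next
    case False
    note ab = False
    define C where "C = kchain l r F col a b (r e)"
    have props: "f \<in> F \<and> (col f = a \<or> col f = b) \<and>
      (col f = a \<longrightarrow> r f = r e \<or> (\<exists>g\<in>C. col g = b \<and> r g = r f)) \<and>
      (col f = b \<longrightarrow> col f = a \<or> (\<exists>g\<in>C. col g = a \<and> l g = l f))" if "f \<in> C" for f
      using kchain_props[of f l r F col a b "r e"] that unfolding C_def by blast
    have notl: "l f \<noteq> l e" if fC0: "f \<in> C" for f
    proof
      assume le: "l f = l e"
      from props[OF fC0] have fF: "f \<in> F" and ab2: "col f = a \<or> col f = b" by blast+
      show False
      proof (cases "col f = a")
        case True then show False using amiss[OF fF le] by simp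
      next
        case False
        then have "col f = b" using ab2 by blast
        then obtain g where g: "g \<in> C" "col g = a" "l g = l f" using props[OF fC0] False by blast
        have "g \<in> F" using props[OF g(1)] by (rule conjunct1)
        then show False using amiss[of g] g(2,3) le by simp
      qed
    qed
    have closure: "f' \<in> C" if f: "f \<in> C" and f': "f' \<in> F" "col f' = a \<or> col f' = b" "col f' \<noteq> col f"
      and adj: "l f = l f' \<or> r f = r f'" for f f'
    proof -
      from props[OF f] have fF: "f \<in> F" and cf: "col f = a \<or> col f = b"
        and pa: "col f = a \<longrightarrow> r f = r e \<or> (\<exists>g\<in>C. col g = b \<and> r g = r f)"
        and pb: "col f = b \<longrightarrow> col f = a \<or> (\<exists>g\<in>C. col g = a \<and> l g = l f)" by blast+
      show ?thesis
      proof (cases "col f = a")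
        case True
        then have cf': "col f' = b" using f' by auto
        show ?thesis
        proof (cases "l f = l f'")
          case True
          then show ?thesis unfolding C_def using kchain.kstepA[of f l r F col a b "r e" f'] f \<open>col f = a\<close> f' cf'
            unfolding C_def by simp
        next
          case False
          then have rr: "r f = r f'" using adj by blast
          from pa \<open>col f = a\<close> have "r f = r e \<or> (\<exists>g\<in>C. col g = b \<and> r g = r f)" by blast
          then show ?thesis
          proof
            assume "r f = r e" then show ?thesis using bmiss f'(1) cf' rr by auto
          next
            assume "\<exists>g\<in>C. col g = b \<and> r g = r f"
            then obtain g where g: "g \<in> C" "col g = b" "r g = r f" by blast
            have "g = f'"
            proof (rule ccontr)
              assume "g \<noteq> f'"
              then have "col g \<noteq> col f'" using pr[of g f'] props[OF g(1)] f'(1) g(3) rr by auto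
              then show False using g(2) cf' by simp
            qed
            then show ?thesis using g(1) by simp
          qed
        qed
      next
        case False
        then have cfb: "col f = b" using cf by blast
        then have cf': "col f' = a" using f' by auto
        show ?thesis
        proof (cases "r f = r f'")
          case True
          then show ?thesis using kchain.kstepB[of f l r F col a b "r e" f'] f cfb f' cf'
            unfolding C_def by simp
        next
          case False
          then have ll: "l f = l f'" using adj by blast
          from pb cfb ab have "\<exists>g\<in>C. col g = a \<and> l g = l f" by auto
          then obtain g where g: "g \<in> C" "col g = a" "l g = l f" by blast
          have "g = f'"
          proof (rule ccontr)
            assume "g \<noteq> f'"
            then have "col g \<noteq> col f'" using pr[of g f'] props[OF g(1)] f'(1) g(3) ll by auto
            then show False using g(2) cf' by simp
          qed
          then show ?thesis using g(1) by simp
        qed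
      qed
    qed
    define sw where "sw c = (if c = a then b else a)" for c
    define col' where "col' f = (if f = e then a else if f \<in> C then sw (col f) else col f)" for f
    have "proper_col l r k (insert e F) col'"
      unfolding proper_col_def
    proof (intro conjI ballI impI)
      fix f assume "f \<in> insert e F" then show "col' f < k" using lt a(1) b(1) unfolding col'_def sw_def by auto
    next
      have key: "col' f \<noteq> col' f'" if f: "f \<in> F" "f' \<in> F" "f \<noteq> f'" "l f = l f' \<or> r f = r f'" for f f'
      proof -
        have fe: "f \<noteq> e" "f' \<noteq> e" using f eF by auto
        show ?thesis
        proof (cases "f \<in> C")
          case True
          note fC = True
          show ?thesis
          proof (cases "f' \<in> C")
            case True
            have "col f \<noteq> col f'" using pr[OF f] .
            moreover have "col f = a \<or> col f = b" using props[OF fC] by blast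
            moreover have "col f' = a \<or> col f' = b" using props[OF True] by blast
            ultimately show ?thesis using fe fC True unfolding col'_def sw_def by auto
          next
            case False
            show ?thesis
            proof
              assume eq: "col' f = col' f'"
              have cfab: "col f = a \<or> col f = b" using props[OF fC] by blast
              then have "col f' = sw (col f)" using eq fe fC False unfolding col'_def by simp
              then have "col f' = a \<or> col f' = b" "col f' \<noteq> col f" using cfab ab unfolding sw_def by auto
              then have "f' \<in> C" using closure[OF fC f(2)] f(4) by blast
              then show False using False by blast
            qed
          qed
        next
          case False
          note fC = False
          show ?thesis
          proof (cases "f' \<in> C")
            case True
            show ?thesis
            proof
              assume eq: "col' f = col' f'"
              have cfab: "col f' = a \<or> col f' = b" using props[OF True] by blast
              then have "col f = sw (col f')" using eq fe fC True unfolding col'_def by simp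
              then have "col f = a \<or> col f = b" "col f \<noteq> col f'" using cfab ab unfolding sw_def by auto
              then have "f \<in> C" using closure[OF True f(1)] f(4) by metis
              then show False using fC by blast
            qed
          next
            case False
            then show ?thesis using fe fC pr[OF f] unfolding col'_def by auto
          qed
        qed
      qed
      have keye: "col' f' \<noteq> a" if f': "f' \<in> F" "l e = l f' \<or> r e = r f'" for f'
      proof -
        have fe: "f' \<noteq> e" using f' eF by auto
        show ?thesis
        proof (cases "l e = l f'")
          case True
          then have "f' \<notin> C" using notl[of f'] by auto
          then show ?thesis using amiss[OF f'(1)] True fe unfolding col'_def by auto
        next
          case False
          then have rr: "r f' = r e" using f' by auto
          show ?thesis
          proof (cases "f' \<in> C")
            case True
            then have "col f' = a \<or> col f' = b" using props[OF True] by blast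
            then have "col f' = a" using bmiss[OF f'(1) rr] by blast
            then show ?thesis using True fe ab unfolding col'_def sw_def by auto
          next
            case False
            have "col f' \<noteq> a"
            proof
              assume "col f' = a"
              then have "f' \<in> C" unfolding C_def using kchain.kbase[of f' F col a "r" "r e" l b] f'(1) rr by simp
              then show False using False by blast
            qed
            then show ?thesis using False fe unfolding col'_def by auto
          qed
        qed
      qed
      fix f f' assume f: "f \<in> insert e F" "f' \<in> insert e F" and h: "f \<noteq> f' \<and> (l f = l f' \<or> r f = r f')"
      show "col' f \<noteq> col' f'"
      proof (cases "f = e")
        case True
        then have "f' \<in> F" using f h by auto
        then show ?thesis using keye[of f'] True h unfolding col'_def by auto
      next
        case False
        note fe = False
        show ?thesis
        proof (cases "f' = e")
          case True
          then have "f \<in> F" using f fe by auto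
          then show ?thesis using keye[of f] True h unfolding col'_def by auto
        next
          case False
          then show ?thesis using key fe f h by auto
        qed
      qed
    qed
    then show ?thesis by blast
  qed
qed

lemma konig:
  fixes l :: "'e \<Rightarrow> 'a" and r :: "'e \<Rightarrow> 'b"
  assumes "finite F" "\<forall>v. card {e\<in>F. l e = v} \<le> k" "\<forall>v. card {e\<in>F. r e = v} \<le> k"
  shows "\<exists>col. proper_col l r k F col"
  using assms
proof (induction F rule: finite_induct)
  case empty
  then show ?case unfolding proper_col_def by simp
next
  case (insert e F)
  have "card {f\<in>F. l f = v} \<le> k" for v
  proof -
    have "card {f\<in>F. l f = v} \<le> card {f\<in>insert e F. l f = v}" using insert(1) by (intro card_mono) auto
    then show ?thesis using insert(4) by (meson order_trans)
  qed
  moreover have "card {f\<in>F. r f = v} \<le> k" for v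
  proof -
    have "card {f\<in>F. r f = v} \<le> card {f\<in>insert e F. r f = v}" using insert(1) by (intro card_mono) auto
    then show ?thesis using insert(5) by (meson order_trans)
  qed
  ultimately obtain col where "proper_col l r k F col" using insert(3) by blast
  then show ?case using konig_step[OF insert(1,2)] insert(4,5) by blast
qed

lemma bg_mult: "f \<in> carrier (BijGroup S) \<Longrightarrow> g \<in> carrier (BijGroup S) \<Longrightarrow> v \<in> S \<Longrightarrow>
    (f \<otimes>\<^bsub>BijGroup S\<^esub> g) v = f (g v)"
  by (simp add: BijGroup_def compose_def)

lemma bg_one: "v \<in> S \<Longrightarrow> \<one>\<^bsub>BijGroup S\<^esub> v = v"
  by (simp add: BijGroup_def)

lemma bg_closed: "f \<in> carrier (BijGroup S) \<Longrightarrow> v \<in> S \<Longrightarrow> f v \<in> S"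
  using Bij_imp_funcset by (fastforce simp: BijGroup_def)

lemma bg_inv1: assumes "f \<in> carrier (BijGroup S)" "v \<in> S"
  shows "f ((inv\<^bsub>BijGroup S\<^esub> f) v) = v"
proof -
  interpret group "BijGroup S" by (rule group_BijGroup)
  have "f \<otimes>\<^bsub>BijGroup S\<^esub> inv\<^bsub>BijGroup S\<^esub> f = \<one>\<^bsub>BijGroup S\<^esub>" using assms(1) by simp
  then have "(f \<otimes>\<^bsub>BijGroup S\<^esub> inv\<^bsub>BijGroup S\<^esub> f) v = v" using bg_one[OF assms(2)] by simp
  then show ?thesis using bg_mult[OF assms(1) inv_closed[OF assms(1)] assms(2)] by simp
qed

lemma bg_inv2: assumes "f \<in> carrier (BijGroup S)" "v \<in> S"
  shows "(inv\<^bsub>BijGroup S\<^esub> f) (f v) = v"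
proof -
  interpret group "BijGroup S" by (rule group_BijGroup)
  have "inv\<^bsub>BijGroup S\<^esub> f \<otimes>\<^bsub>BijGroup S\<^esub> f = \<one>\<^bsub>BijGroup S\<^esub>" using assms(1) by simp
  then have "(inv\<^bsub>BijGroup S\<^esub> f \<otimes>\<^bsub>BijGroup S\<^esub> f) v = v" using bg_one[OF assms(2)] by simp
  then show ?thesis using bg_mult[OF inv_closed[OF assms(1)] assms(1) assms(2)] by simp
qed

locale LS =
  fixes V1 V2 :: "'v set" and E1 E2 :: "'v \<Rightarrow> 'v \<Rightarrow> bool"
    and L0 :: "('v \<times> 'v \<Rightarrow> 'v \<times> 'v) set" and c1 c2 :: "'v \<Rightarrow> bool" and z0 :: 'v
  assumes RT1: "regular_tree V1 E1 4" and RT2: "regular_tree V2 E2 4"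
    and lat: "tp_lattice V1 E1 V2 E2 L0" and coc: "cocompact V1 V2 L0"
    and c1: "\<forall>x y. E1 x y \<longrightarrow> c1 x \<noteq> c1 y" and c2: "\<forall>x y. E2 x y \<longrightarrow> c2 x \<noteq> c2 y"
    and z0: "z0 \<in> V2"
begin

abbreviation "G \<equiv> BijGroup (V1 \<times> V2)"

lemma grp: "group G" by (rule group_BijGroup)

lemma T1: "is_tree V1 E1" using RT1 unfolding regular_tree_def by blast
lemma T2: "is_tree V2 E2" using RT2 unfolding regular_tree_def by blast

lemma L0sub: "subgroup L0 G" using lat unfolding tp_lattice_def by blast
lemma L0aut: "f \<in> L0 \<Longrightarrow> prod_aut V1 E1 V2 E2 f" using lat unfolding tp_lattice_def by blast
lemma L0prop: "K \<subseteq> V1 \<times> V2 \<Longrightarrow> finite K \<Longrightarrow> finite {g\<in>L0. g ` K \<inter> K \<noteq> {}}"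
  using lat unfolding tp_lattice_def by blast
lemma L0car: "f \<in> L0 \<Longrightarrow> f \<in> carrier G" using subgroup.mem_carrier[OF L0sub] .

definition P :: "'v \<times> 'v \<Rightarrow> bool \<times> bool" where "P v = (c1 (fst v), c2 (snd v))"

lemma Pdep:
  assumes f: "f \<in> L0" and v: "v \<in> V1 \<times> V2" "v' \<in> V1 \<times> V2" and eq: "P v = P v'"
  shows "P (f v) = P (f v')"
proof -
  obtain x y x' y' where xy: "v = (x, y)" "v' = (x', y')" by (cases v, cases v') auto
  have xy2: "x \<in> V1" "y \<in> V2" "x' \<in> V1" "y' \<in> V2" using v xy by auto
  have e: "c1 x = c1 x'" "c2 y = c2 y'" using eq xy unfolding P_def by auto
  have "factor_preserving V1 E1 V2 E2 f \<or> factor_exchanging V1 E1 V2 E2 f"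
    using L0aut[OF f] unfolding prod_aut_def .
  then show ?thesis
  proof
    assume "factor_preserving V1 E1 V2 E2 f"
    then obtain g1 g2 where g: "graph_iso V1 E1 V1 E1 g1" "graph_iso V2 E2 V2 E2 g2"
      "\<forall>x\<in>V1. \<forall>y\<in>V2. f (x, y) = (g1 x, g2 y)" unfolding factor_preserving_def by blast
    have "c1 (g1 x) = c1 (g1 x')" using iso_parity[OF g(1) T1 c1 c1 xy2(1,3) e(1)] .
    moreover have "c2 (g2 y) = c2 (g2 y')" using iso_parity[OF g(2) T2 c2 c2 xy2(2,4) e(2)] .
    ultimately show ?thesis using g(3) xy xy2 unfolding P_def by simp
  next
    assume "factor_exchanging V1 E1 V2 E2 f"
    then obtain h1 h2 where g: "graph_iso V2 E2 V1 E1 h1" "graph_iso V1 E1 V2 E2 h2"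
      "\<forall>x\<in>V1. \<forall>y\<in>V2. f (x, y) = (h1 y, h2 x)" unfolding factor_exchanging_def by blast
    have "c1 (h1 y) = c1 (h1 y')" using iso_parity[OF g(1) T2 c2 c1 xy2(2,4) e(2)] .
    moreover have "c2 (h2 x) = c2 (h2 x')" using iso_parity[OF g(2) T1 c1 c2 xy2(1,3) e(1)] .
    ultimately show ?thesis using g(3) xy xy2 unfolding P_def by simp
  qed
qed

definition H where "H = {f \<in> L0. \<forall>v\<in>V1 \<times> V2. P (f v) = P v}"

lemma H_L0: "H \<subseteq> L0" unfolding H_def by blast

lemma Hsub: "subgroup H G"
proof (rule group.subgroupI[OF grp])
  show "H \<subseteq> carrier G" using H_L0 L0car by blast
  show "H \<noteq> {}"
  proof -
    have "\<one>\<^bsub>G\<^esub> \<in> L0" using subgroup.one_closed[OF L0sub] .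
    moreover have "\<forall>v\<in>V1 \<times> V2. P (\<one>\<^bsub>G\<^esub> v) = P v" using bg_one by metis
    ultimately show ?thesis unfolding H_def by blast
  qed
next
  fix f assume f: "f \<in> H"
  then have fL: "f \<in> L0" and fP: "\<forall>v\<in>V1 \<times> V2. P (f v) = P v" unfolding H_def by auto
  have iL: "inv\<^bsub>G\<^esub> f \<in> L0" using subgroup.m_inv_closed[OF L0sub fL] .
  have "P ((inv\<^bsub>G\<^esub> f) v) = P v" if v: "v \<in> V1 \<times> V2" for v
  proof -
    have w: "(inv\<^bsub>G\<^esub> f) v \<in> V1 \<times> V2" using bg_closed[OF L0car[OF iL] v] .
    have "P (f ((inv\<^bsub>G\<^esub> f) v)) = P ((inv\<^bsub>G\<^esub> f) v)" using bspec[OF fP w] .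
    then show ?thesis using bg_inv1[OF L0car[OF fL] v] by simp
  qed
  then show "inv\<^bsub>G\<^esub> f \<in> H" using iL unfolding H_def by blast
next
  fix f g assume f: "f \<in> H" and g: "g \<in> H"
  then have fL: "f \<in> L0" and fP: "\<forall>v\<in>V1 \<times> V2. P (f v) = P v"
    and gL: "g \<in> L0" and gP: "\<forall>v\<in>V1 \<times> V2. P (g v) = P v" unfolding H_def by auto
  have mL: "f \<otimes>\<^bsub>G\<^esub> g \<in> L0" using subgroup.m_closed[OF L0sub fL gL] .
  have "P ((f \<otimes>\<^bsub>G\<^esub> g) v) = P v" if v: "v \<in> V1 \<times> V2" for v
  proof -
    have w: "g v \<in> V1 \<times> V2" using bg_closed[OF L0car[OF gL] v] .
    show ?thesis using bg_mult[OF L0car[OF fL] L0car[OF gL] v] bspec[OF fP w] bspec[OF gP v] by simp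
  qed
  then show "f \<otimes>\<^bsub>G\<^esub> g \<in> H" using mL unfolding H_def by blast
qed

definition psi where "psi a = {(P v, P (a v)) | v. v \<in> V1 \<times> V2}"

lemma psi_coset:
  assumes a: "a \<in> L0" and b: "b \<in> L0" and eq: "psi a = psi b"
  shows "H #>\<^bsub>G\<^esub> a = H #>\<^bsub>G\<^esub> b"
proof -
  have ib: "inv\<^bsub>G\<^esub> b \<in> L0" using subgroup.m_inv_closed[OF L0sub b] .
  have m: "a \<otimes>\<^bsub>G\<^esub> inv\<^bsub>G\<^esub> b \<in> L0" using subgroup.m_closed[OF L0sub a ib] .
  have "P ((a \<otimes>\<^bsub>G\<^esub> inv\<^bsub>G\<^esub> b) w) = P w" if w: "w \<in> V1 \<times> V2" for w
  proof -
    define v where "v = (inv\<^bsub>G\<^esub> b) w"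
    have v: "v \<in> V1 \<times> V2" unfolding v_def using bg_closed[OF L0car[OF ib] w] .
    have bv: "b v = w" unfolding v_def using bg_inv1[OF L0car[OF b] w] .
    have "(P v, P w) \<in> psi b" unfolding psi_def using v bv by blast
    then have "(P v, P w) \<in> psi a" using eq by simp
    then obtain v' where v': "v' \<in> V1 \<times> V2" "P v = P v'" "P w = P (a v')" unfolding psi_def by blast
    have "P (a v) = P (a v')" using Pdep[OF a v v'(1) v'(2)] .
    moreover have "(a \<otimes>\<^bsub>G\<^esub> inv\<^bsub>G\<^esub> b) w = a v"
      unfolding v_def using bg_mult[OF L0car[OF a] L0car[OF ib] w] .
    ultimately show ?thesis using v'(3) by simp
  qed
  then have "a \<otimes>\<^bsub>G\<^esub> inv\<^bsub>G\<^esub> b \<in> H" using m unfolding H_def by blast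
  then have "a \<in> H #>\<^bsub>G\<^esub> b" using subgroup.rcos_module_rev[OF Hsub grp L0car[OF b] L0car[OF a]] by blast
  then show ?thesis using group.repr_independence[OF grp _ L0car[OF b] Hsub] by metis
qed

lemma H_fin_cosets: "finite {H #>\<^bsub>G\<^esub> a | a. a \<in> L0}"
proof -
  define rep where "rep Xs = (SOME a. a \<in> L0 \<and> psi a = Xs)" for Xs
  have "{H #>\<^bsub>G\<^esub> a | a. a \<in> L0} \<subseteq> (\<lambda>Xs. H #>\<^bsub>G\<^esub> rep Xs) ` (psi ` L0)"
  proof
    fix Y assume "Y \<in> {H #>\<^bsub>G\<^esub> a | a. a \<in> L0}"
    then obtain a where a: "a \<in> L0" "Y = H #>\<^bsub>G\<^esub> a" by blast
    have "\<exists>a'. a' \<in> L0 \<and> psi a' = psi a" using a(1) by blast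
    then have r: "rep (psi a) \<in> L0 \<and> psi (rep (psi a)) = psi a" unfolding rep_def by (rule someI_ex)
    have "Y = H #>\<^bsub>G\<^esub> rep (psi a)" using psi_coset[OF a(1), of "rep (psi a)"] r a(2) by simp
    then show "Y \<in> (\<lambda>Xs. H #>\<^bsub>G\<^esub> rep Xs) ` (psi ` L0)" using a(1) by blast
  qed
  moreover have "finite (psi ` L0)" by (rule finite_subset[of _ UNIV]) simp_all
  ultimately show ?thesis using finite_subset by blast
qed

end

context LS begin

lemma edge1: "\<exists>x0 x1. x0 \<in> V1 \<and> x1 \<in> V1 \<and> E1 x0 x1"
proof -
  obtain x0 where x0: "x0 \<in> V1" using tree_ne[OF T1] by blast
  have "card {w. E1 x0 w} = 4" using RT1 x0 unfolding regular_tree_def by blast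
  then have "{w. E1 x0 w} \<noteq> {}" by (metis card.empty zero_neq_numeral)
  then obtain x1 where "E1 x0 x1" by blast
  then show ?thesis using tree_edge[OF T1] by blast
qed

lemma H_fp: assumes f: "f \<in> H" shows "factor_preserving V1 E1 V2 E2 f"
proof -
  have fL: "f \<in> L0" and fP: "\<forall>v\<in>V1 \<times> V2. P (f v) = P v" using f unfolding H_def by auto
  have "factor_preserving V1 E1 V2 E2 f \<or> factor_exchanging V1 E1 V2 E2 f"
    using L0aut[OF fL] unfolding prod_aut_def .
  moreover have "\<not> factor_exchanging V1 E1 V2 E2 f"
  proof
    assume "factor_exchanging V1 E1 V2 E2 f"
    then obtain h1 h2 where g: "\<forall>x\<in>V1. \<forall>y\<in>V2. f (x, y) = (h1 y, h2 x)"
      unfolding factor_exchanging_def by blast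
    obtain x0 x1 where x: "x0 \<in> V1" "x1 \<in> V1" "E1 x0 x1" using edge1 by blast
    have "P (f (x0, z0)) = P (x0, z0)" using fP x z0 by blast
    then have a: "c1 (h1 z0) = c1 x0" using g x z0 unfolding P_def by simp
    have "P (f (x1, z0)) = P (x1, z0)" using fP x z0 by blast
    then have b: "c1 (h1 z0) = c1 x1" using g x z0 unfolding P_def by simp
    show False using a b c1 x(3) by simp
  qed
  ultimately show ?thesis by blast
qed

lemma TPG_eq: "TPG V1 V2 L = G\<lparr>carrier := L\<rparr>" unfolding TPG_def ..

lemma H_fi: "finite_index (TPG V1 V2 L0) H"
  unfolding finite_index_def TPG_eq
proof
  show "subgroup H (G\<lparr>carrier := L0\<rparr>)" using group.subgroup_incl[OF grp Hsub L0sub H_L0] .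
  show "finite (rcosets\<^bsub>G\<lparr>carrier := L0\<rparr>\<^esub> H)" using H_fin_cosets rcosets_upd[where G=G and L=L0 and H=H] by simp
qed

lemma reps: "\<exists>R. finite R \<and> R \<subseteq> L0 \<and> (\<forall>a\<in>L0. \<exists>h\<in>H. \<exists>b\<in>R. a = h \<otimes>\<^bsub>G\<^esub> b)"
  using reps_exist[OF grp L0sub Hsub H_L0 H_fin_cosets] .

lemma H_lat: "tp_lattice V1 E1 V2 E2 H"
  unfolding tp_lattice_def
proof (intro conjI allI impI ballI)
  show "subgroup H G" by (rule Hsub)
  fix f assume "f \<in> H" then show "prod_aut V1 E1 V2 E2 f" using L0aut H_L0 by blast
next
  fix K assume K: "K \<subseteq> V1 \<times> V2 \<and> finite K"
  have "{g \<in> H. g ` K \<inter> K \<noteq> {}} \<subseteq> {g \<in> L0. g ` K \<inter> K \<noteq> {}}" using H_L0 by blast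
  then show "finite {g \<in> H. g ` K \<inter> K \<noteq> {}}" using L0prop K finite_subset by blast
qed

lemma H_coc: "cocompact V1 V2 H"
proof -
  obtain K where K: "finite K" "K \<subseteq> V1 \<times> V2" "V1 \<times> V2 = (\<Union>g\<in>L0. g ` K)"
    using coc unfolding cocompact_def by blast
  obtain R where R: "finite R" "R \<subseteq> L0" "\<forall>a\<in>L0. \<exists>h\<in>H. \<exists>b\<in>R. a = h \<otimes>\<^bsub>G\<^esub> b" using reps by blast
  define K' where "K' = (\<Union>b\<in>R. b ` K)"
  have fK': "finite K'" unfolding K'_def using R(1) K(1) by simp
  have sK': "K' \<subseteq> V1 \<times> V2"
  proof
    fix w assume "w \<in> K'"
    then obtain b k where "b \<in> R" "k \<in> K" "w = b k" unfolding K'_def by blast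
    then show "w \<in> V1 \<times> V2" using bg_closed[OF L0car[OF subsetD[OF R(2)]], of b k] K(2) by blast
  qed
  have "V1 \<times> V2 \<subseteq> (\<Union>g\<in>H. g ` K')"
  proof
    fix v assume "v \<in> V1 \<times> V2"
    then obtain g k where gk: "g \<in> L0" "k \<in> K" "v = g k" using K(3) by blast
    obtain h b where hb: "h \<in> H" "b \<in> R" "g = h \<otimes>\<^bsub>G\<^esub> b" using R(3) gk(1) by blast
    have hG: "h \<in> carrier G" using H_L0 hb(1) L0car by blast
    have bG: "b \<in> carrier G" using R(2) hb(2) L0car by blast
    have "v = h (b k)" using gk hb bg_mult[OF hG bG] K(2) by auto
    moreover have "b k \<in> K'" unfolding K'_def using hb(2) gk(2) by blast
    ultimately show "v \<in> (\<Union>g\<in>H. g ` K')" using hb(1) by blast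
  qed
  moreover have "(\<Union>g\<in>H. g ` K') \<subseteq> V1 \<times> V2"
  proof
    fix w assume "w \<in> (\<Union>g\<in>H. g ` K')"
    then obtain g k where "g \<in> H" "k \<in> K'" "w = g k" by blast
    then show "w \<in> V1 \<times> V2" using bg_closed[OF L0car[OF subsetD[OF H_L0]], of g k] sK' by blast
  qed
  ultimately have "V1 \<times> V2 = (\<Union>g\<in>H. g ` K')" by (rule antisym)
  then show ?thesis unfolding cocompact_def using fK' sK' by blast
qed

lemma H_tf: assumes "torsion_free (TPG V1 V2 L0)" shows "torsion_free (TPG V1 V2 H)"
  using assms H_L0 unfolding torsion_free_def TPG_eq
  by (auto simp: monoid.nat_pow_consistent[OF group.is_monoid[OF grp], symmetric])

lemma H_irr: assumes irr: "irreducible_grp (TPG V1 V2 L0)" shows "irreducible_grp (TPG V1 V2 H)"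
  unfolding irreducible_grp_def
proof
  assume "\<exists>H' A B. finite_index (TPG V1 V2 H) H' \<and> internal_direct_product (TPG V1 V2 H) H' A B \<and>
        infinite A \<and> infinite B"
  then obtain H' A B where fi: "finite_index (G\<lparr>carrier := H\<rparr>) H'"
    and idp: "internal_direct_product (G\<lparr>carrier := H\<rparr>) H' A B" and inf: "infinite A" "infinite B"
    unfolding TPG_eq by blast
  have sH': "subgroup H' (G\<lparr>carrier := H\<rparr>)" and fH': "finite (rcosets\<^bsub>G\<lparr>carrier := H\<rparr>\<^esub> H')"
    using fi unfolding finite_index_def by blast+
  have H'G: "subgroup H' G" using group.incl_subgroup[OF grp Hsub sH'] .
  have H'H: "H' \<subseteq> H" using subgroup.subset[OF sH'] by simp
  have fi0: "finite_index (G\<lparr>carrier := L0\<rparr>) H'"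
    unfolding finite_index_def
  proof
    show "subgroup H' (G\<lparr>carrier := L0\<rparr>)" using group.subgroup_incl[OF grp H'G L0sub] H'H H_L0 by blast
    have "finite {H' #>\<^bsub>G\<^esub> a | a. a \<in> H}" using fH' rcosets_upd[where G=G and L=H and H=H'] by simp
    then have "finite {H' #>\<^bsub>G\<^esub> a | a. a \<in> L0}"
      using index_trans[OF grp L0sub Hsub H_L0 H'G H'H H_fin_cosets] by blast
    then show "finite (rcosets\<^bsub>G\<lparr>carrier := L0\<rparr>\<^esub> H')" using rcosets_upd[where G=G and L=L0 and H=H'] by simp
  qed
  have sA: "subgroup A (G\<lparr>carrier := H\<rparr>)" and sB: "subgroup B (G\<lparr>carrier := H\<rparr>)"
    and AH: "A \<subseteq> H'" and BH: "B \<subseteq> H'"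
    and rest: "(\<forall>a\<in>A. \<forall>b\<in>B. a \<otimes>\<^bsub>G\<^esub> b = b \<otimes>\<^bsub>G\<^esub> a) \<and> A \<inter> B = {\<one>\<^bsub>G\<^esub>} \<and> A <#>\<^bsub>G\<^esub> B = H'"
    using idp unfolding internal_direct_product_def by (auto simp: set_mult_def)
  have AG: "subgroup A G" using group.incl_subgroup[OF grp Hsub sA] .
  have BG: "subgroup B G" using group.incl_subgroup[OF grp Hsub sB] .
  have "internal_direct_product (G\<lparr>carrier := L0\<rparr>) H' A B"
    unfolding internal_direct_product_def
  proof (intro conjI)
    show "subgroup A (G\<lparr>carrier := L0\<rparr>)" using group.subgroup_incl[OF grp AG L0sub] AH H'H H_L0 by blast
    show "subgroup B (G\<lparr>carrier := L0\<rparr>)" using group.subgroup_incl[OF grp BG L0sub] BH H'H H_L0 by blast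
  qed (use AH BH rest in \<open>auto simp: set_mult_def\<close>)
  then show False using irr fi0 inf unfolding irreducible_grp_def TPG_eq by blast
qed

end

context LS begin

definition S where "S = slice_stab V1 H z0"
definition act where "act g x = fst (g (x, z0))"
abbreviation Orb where "Orb x \<equiv> slice_orbit S z0 x"
abbreviation EOr where "EOr x y \<equiv> slice_edge_orbit S z0 x y"

lemma HG: "g \<in> H \<Longrightarrow> g \<in> carrier G" using L0car H_L0 by blast

lemma stab_crit:
  assumes g: "g \<in> H" and a: "a \<in> V1" and s: "snd (g (a, z0)) = z0"
  shows "g \<in> S"
proof -
  obtain g1 g2 where gi: "graph_iso V1 E1 V1 E1 g1" "graph_iso V2 E2 V2 E2 g2"
    and ge: "\<forall>x\<in>V1. \<forall>y\<in>V2. g (x, y) = (g1 x, g2 y)"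
    using H_fp[OF g] unfolding factor_preserving_def by blast
  have g2: "g2 z0 = z0" using s ge a z0 by simp
  have b: "bij_betw g1 V1 V1" using gi(1) unfolding graph_iso_def by blast
  then have im: "g1 ` V1 = V1" by (simp add: bij_betw_def)
  have "g ` (V1 \<times> {z0}) = V1 \<times> {z0}"
  proof
    show "g ` (V1 \<times> {z0}) \<subseteq> V1 \<times> {z0}" using ge z0 g2 im by auto
    show "V1 \<times> {z0} \<subseteq> g ` (V1 \<times> {z0})"
    proof
      fix w assume "w \<in> V1 \<times> {z0}"
      then obtain x where x: "x \<in> V1" "w = (x, z0)" by blast
      then obtain x' where x': "x' \<in> V1" "x = g1 x'" using im by blast
      then have "g (x', z0) = w" using ge z0 g2 x by simp
      then show "w \<in> g ` (V1 \<times> {z0})" using x' by force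
    qed
  qed
  then show ?thesis unfolding S_def slice_stab_def using g by blast
qed

lemma S_H: "g \<in> S \<Longrightarrow> g \<in> H" unfolding S_def slice_stab_def by blast

lemma S_map: assumes "g \<in> S" "x \<in> V1" shows "g (x, z0) = (act g x, z0)" "act g x \<in> V1"
proof -
  have "g ` (V1 \<times> {z0}) = V1 \<times> {z0}" using assms(1) unfolding S_def slice_stab_def by blast
  then have "g (x, z0) \<in> V1 \<times> {z0}" using assms(2) by blast
  then show "g (x, z0) = (act g x, z0)" "act g x \<in> V1" unfolding act_def by auto
qed

lemma S_par: assumes "g \<in> S" "x \<in> V1" shows "c1 (act g x) = c1 x"
proof -
  have "\<forall>v\<in>V1 \<times> V2. P (g v) = P v" using S_H[OF assms(1)] unfolding H_def by blast
  then have "P (g (x, z0)) = P (x, z0)" using assms(2) z0 by blast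
  then show ?thesis unfolding P_def act_def by simp
qed

lemma S_edge: assumes "g \<in> S" "x \<in> V1" "y \<in> V1" "E1 x y" shows "E1 (act g x) (act g y)"
proof -
  obtain g1 g2 where gi: "graph_iso V1 E1 V1 E1 g1"
    and ge: "\<forall>x\<in>V1. \<forall>y\<in>V2. g (x, y) = (g1 x, g2 y)"
    using H_fp[OF S_H[OF assms(1)]] unfolding factor_preserving_def by blast
  have "E1 (g1 x) (g1 y)" using gi assms(2-4) unfolding graph_iso_def by blast
  then show ?thesis using ge assms(2,3) z0 unfolding act_def by simp
qed

lemma V1ne: "\<exists>a. a \<in> V1" using tree_ne[OF T1] by blast

lemma S_one: "\<one>\<^bsub>G\<^esub> \<in> S"
proof -
  obtain a where a: "a \<in> V1" using V1ne by blast
  have "\<one>\<^bsub>G\<^esub> \<in> H" using subgroup.one_closed[OF Hsub] .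
  moreover have "snd (\<one>\<^bsub>G\<^esub> (a, z0)) = z0" using bg_one[of "(a, z0)" "V1 \<times> V2"] a z0 by simp
  ultimately show ?thesis using stab_crit a by blast
qed

lemma act_one: "x \<in> V1 \<Longrightarrow> act (\<one>\<^bsub>G\<^esub>) x = x"
  unfolding act_def using bg_one[of "(x, z0)" "V1 \<times> V2"] z0 by simp

lemma S_mult: assumes g: "g \<in> S" and h: "h \<in> S" shows "g \<otimes>\<^bsub>G\<^esub> h \<in> S" and "x \<in> V1 \<Longrightarrow> act (g \<otimes>\<^bsub>G\<^esub> h) x = act g (act h x)"
proof -
  have gh: "g \<otimes>\<^bsub>G\<^esub> h \<in> H" using subgroup.m_closed[OF Hsub S_H[OF g] S_H[OF h]] .
  have eq: "(g \<otimes>\<^bsub>G\<^esub> h) (x, z0) = (act g (act h x), z0)" if x: "x \<in> V1" for x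
  proof -
    have "(g \<otimes>\<^bsub>G\<^esub> h) (x, z0) = g (h (x, z0))" using bg_mult[OF HG[OF S_H[OF g]] HG[OF S_H[OF h]]] x z0 by simp
    also have "\<dots> = g (act h x, z0)" using S_map(1)[OF h x] by simp
    also have "\<dots> = (act g (act h x), z0)" using S_map[OF g S_map(2)[OF h x]] by simp
    finally show ?thesis .
  qed
  obtain a where a: "a \<in> V1" using V1ne by blast
  show "g \<otimes>\<^bsub>G\<^esub> h \<in> S" using stab_crit[OF gh a] eq[OF a] by simp
  show "x \<in> V1 \<Longrightarrow> act (g \<otimes>\<^bsub>G\<^esub> h) x = act g (act h x)" using eq unfolding act_def by simp
qed

lemma S_inv: assumes g: "g \<in> S" shows "inv\<^bsub>G\<^esub> g \<in> S" and "x \<in> V1 \<Longrightarrow> act (inv\<^bsub>G\<^esub> g) (act g x) = x"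
proof -
  have ig: "inv\<^bsub>G\<^esub> g \<in> H" using subgroup.m_inv_closed[OF Hsub S_H[OF g]] .
  have eq: "(inv\<^bsub>G\<^esub> g) (act g x, z0) = (x, z0)" if x: "x \<in> V1" for x
    using bg_inv2[OF HG[OF S_H[OF g]], of "(x, z0)"] S_map(1)[OF g x] x z0 by simp
  obtain a where a: "a \<in> V1" using V1ne by blast
  show "inv\<^bsub>G\<^esub> g \<in> S" using stab_crit[OF ig S_map(2)[OF g a]] eq[OF a] by simp
  show "x \<in> V1 \<Longrightarrow> act (inv\<^bsub>G\<^esub> g) (act g x) = x" using eq unfolding act_def by simp
qed

lemma O_def': "Orb x = {act g x | g. g \<in> S}" unfolding slice_orbit_def act_def ..
lemma EO_def': "EOr x y = {{act g x, act g y} | g. g \<in> S}" unfolding slice_edge_orbit_def act_def ..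

lemma orb_self: assumes "x \<in> V1" shows "x \<in> Orb x"
proof -
  have "x = act (\<one>\<^bsub>G\<^esub>) x" using act_one[OF assms] by simp
  then show ?thesis unfolding O_def' using S_one by blast
qed

lemma orb_sub: assumes x: "x \<in> V1" and y: "y \<in> Orb x" shows "y \<in> V1 \<and> c1 y = c1 x"
proof -
  obtain g where g: "g \<in> S" "y = act g x" using y unfolding O_def' by blast
  then show ?thesis using S_map(2)[OF g(1) x] S_par[OF g(1) x] by simp
qed

lemma orb_eq: assumes x: "x \<in> V1" and y: "y \<in> Orb x" shows "Orb y = Orb x"
proof -
  obtain g where g: "g \<in> S" "y = act g x" using y unfolding O_def' by blast
  show ?thesis
  proof
    show "Orb y \<subseteq> Orb x"
    proof
      fix z assume "z \<in> Orb y"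
      then obtain h where h: "h \<in> S" "z = act h y" unfolding O_def' by blast
      then have "z = act (h \<otimes>\<^bsub>G\<^esub> g) x" using S_mult(2)[OF h(1) g(1) x] g(2) by simp
      then show "z \<in> Orb x" unfolding O_def' using S_mult(1)[OF h(1) g(1)] by blast
    qed
    show "Orb x \<subseteq> Orb y"
    proof
      fix z assume "z \<in> Orb x"
      then obtain h where h: "h \<in> S" "z = act h x" unfolding O_def' by blast
      have yV: "y \<in> V1" using g S_map(2) x by blast
      have "act (h \<otimes>\<^bsub>G\<^esub> inv\<^bsub>G\<^esub> g) y = act h (act (inv\<^bsub>G\<^esub> g) (act g x))"
        using S_mult(2)[OF h(1) S_inv(1)[OF g(1)] yV] g(2) by simp
      also have "\<dots> = z" using S_inv(2)[OF g(1) x] h(2) by simp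
      finally show "z \<in> Orb y" unfolding O_def' using S_mult(1)[OF h(1) S_inv(1)[OF g(1)]] by blast
    qed
  qed
qed

lemma embedded: assumes "x \<in> V1" "y \<in> V1" "E1 x y" shows "Orb x \<noteq> Orb y"
proof
  assume "Orb x = Orb y"
  then have "y \<in> Orb x" using orb_self[OF assms(2)] by simp
  then have "c1 y = c1 x" using orb_sub[OF assms(1)] by blast
  moreover have "c1 x \<noteq> c1 y" using c1 assms(3) by blast
  ultimately show False by simp
qed

lemma eo_move: assumes g: "g \<in> S" and x: "x \<in> V1" and y: "y \<in> V1"
  shows "EOr (act g x) (act g y) = EOr x y"
proof
  show "EOr (act g x) (act g y) \<subseteq> EOr x y"
  proof
    fix e assume "e \<in> EOr (act g x) (act g y)"
    then obtain h where h: "h \<in> S" "e = {act h (act g x), act h (act g y)}" unfolding EO_def' by blast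
    then have "e = {act (h \<otimes>\<^bsub>G\<^esub> g) x, act (h \<otimes>\<^bsub>G\<^esub> g) y}" using S_mult(2)[OF h(1) g] x y by simp
    then show "e \<in> EOr x y" unfolding EO_def' using S_mult(1)[OF h(1) g] by blast
  qed
  show "EOr x y \<subseteq> EOr (act g x) (act g y)"
  proof
    fix e assume "e \<in> EOr x y"
    then obtain h where h: "h \<in> S" "e = {act h x, act h y}" unfolding EO_def' by blast
    have gx: "act g x \<in> V1" "act g y \<in> V1" using S_map(2)[OF g] x y by blast+
    have "act (h \<otimes>\<^bsub>G\<^esub> inv\<^bsub>G\<^esub> g) (act g x) = act h x"
      using S_mult(2)[OF h(1) S_inv(1)[OF g] gx(1)] S_inv(2)[OF g x] by simp
    moreover have "act (h \<otimes>\<^bsub>G\<^esub> inv\<^bsub>G\<^esub> g) (act g y) = act h y"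
      using S_mult(2)[OF h(1) S_inv(1)[OF g] gx(2)] S_inv(2)[OF g y] by simp
    ultimately have "e = {act (h \<otimes>\<^bsub>G\<^esub> inv\<^bsub>G\<^esub> g) (act g x), act (h \<otimes>\<^bsub>G\<^esub> inv\<^bsub>G\<^esub> g) (act g y)}"
      using h(2) by simp
    then show "e \<in> EOr (act g x) (act g y)" unfolding EO_def' using S_mult(1)[OF h(1) S_inv(1)[OF g]] by blast
  qed
qed

lemma eo_union: "\<Union> (EOr x y) = Orb x \<union> Orb y"
  unfolding EO_def' O_def' by blast

lemma eo_sym: "EOr x y = EOr y x"
  unfolding EO_def' by (simp add: insert_commute)

end

lemma tree_sym: "is_tree V E \<Longrightarrow> E x y \<Longrightarrow> E y x"
  unfolding is_tree_def by blast

context LS begin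

definition QE where "QE = quotient_edges V1 E1 S z0"
definition lq where "lq Q = {v \<in> \<Union>Q. c1 v}"
definition rq where "rq Q = {v \<in> \<Union>Q. \<not> c1 v}"

lemma QE_normal: assumes "Q \<in> QE"
  shows "\<exists>x y. x \<in> V1 \<and> y \<in> V1 \<and> E1 x y \<and> c1 x \<and> \<not> c1 y \<and> Q = EOr x y"
proof -
  obtain x y where xy: "x \<in> V1" "y \<in> V1" "E1 x y" "Q = EOr x y"
    using assms unfolding QE_def quotient_edges_def by blast
  have d: "c1 x \<noteq> c1 y" using c1 xy(3) by blast
  show ?thesis
  proof (cases "c1 x")
    case True then show ?thesis using xy d by blast
  next
    case False
    have "E1 y x" using tree_sym[OF T1 xy(3)] .
    moreover have "Q = EOr y x" using xy(4) eo_sym by simp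
    ultimately show ?thesis using xy d False by blast
  qed
qed

lemma lr_normal: assumes "x \<in> V1" "y \<in> V1" "c1 x" "\<not> c1 y"
  shows "lq (EOr x y) = Orb x" "rq (EOr x y) = Orb y"
proof -
  have px: "\<And>v. v \<in> Orb x \<Longrightarrow> c1 v" using orb_sub[OF assms(1)] assms(3) by blast
  have py: "\<And>v. v \<in> Orb y \<Longrightarrow> \<not> c1 v" using orb_sub[OF assms(2)] assms(4) by blast
  show "lq (EOr x y) = Orb x" unfolding lq_def eo_union using px py by blast
  show "rq (EOr x y) = Orb y" unfolding rq_def eo_union using px py by blast
qed

lemma share_lr: assumes Q1: "Q1 \<in> QE" and Q2: "Q2 \<in> QE" and sh: "share_vertex S z0 Q1 Q2"
  shows "lq Q1 = lq Q2 \<or> rq Q1 = rq Q2"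
proof -
  obtain x1 y1 where n1: "x1 \<in> V1" "y1 \<in> V1" "E1 x1 y1" "c1 x1" "\<not> c1 y1" "Q1 = EOr x1 y1"
    using QE_normal[OF Q1] by blast
  obtain x2 y2 where n2: "x2 \<in> V1" "y2 \<in> V1" "E1 x2 y2" "c1 x2" "\<not> c1 y2" "Q2 = EOr x2 y2"
    using QE_normal[OF Q2] by blast
  obtain a b where ab: "a \<in> \<Union>Q1" "b \<in> \<Union>Q2" "Orb a = Orb b"
    using sh unfolding share_vertex_def by blast
  have a: "a \<in> Orb x1 \<or> a \<in> Orb y1" using ab(1) n1(6) eo_union by blast
  have b: "b \<in> Orb x2 \<or> b \<in> Orb y2" using ab(2) n2(6) eo_union by blast
  have aV: "a \<in> V1" using a orb_sub n1 by blast
  have bV: "b \<in> V1" using b orb_sub n2 by blast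
  have "b \<in> Orb a" using ab(3) orb_self[OF bV] by simp
  then have cab: "c1 b = c1 a" using orb_sub[OF aV] by blast
  show ?thesis
  proof (cases "c1 a")
    case True
    then have "a \<in> Orb x1" using a orb_sub[OF n1(2)] n1(5) by blast
    then have e1: "Orb a = Orb x1" using orb_eq[OF n1(1)] by blast
    have "b \<in> Orb x2" using b orb_sub[OF n2(2)] n2(5) cab True by blast
    then have e2: "Orb b = Orb x2" using orb_eq[OF n2(1)] by blast
    have "lq Q1 = Orb x1" "lq Q2 = Orb x2" using lr_normal n1 n2 by blast+
    then show ?thesis using e1 e2 ab(3) by simp
  next
    case False
    then have "a \<in> Orb y1" using a orb_sub[OF n1(1)] n1(4) by blast
    then have e1: "Orb a = Orb y1" using orb_eq[OF n1(2)] by blast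
    have "b \<in> Orb y2" using b orb_sub[OF n2(1)] n2(4) cab False by blast
    then have e2: "Orb b = Orb y2" using orb_eq[OF n2(2)] by blast
    have "rq Q1 = Orb y1" "rq Q2 = Orb y2" using lr_normal n1 n2 by blast+
    then show ?thesis using e1 e2 ab(3) by simp
  qed
qed

lemma move: assumes x: "x \<in> V1" and x': "x' \<in> V1" and eq: "Orb x' = Orb x" and y: "y \<in> V1" and e: "E1 x y"
  shows "\<exists>y'. y' \<in> V1 \<and> E1 x' y' \<and> EOr x y = EOr x' y'"
proof -
  have "x' \<in> Orb x" using orb_self[OF x'] eq by simp
  then obtain g where g: "g \<in> S" "x' = act g x" unfolding O_def' by blast
  have "act g y \<in> V1" using S_map(2)[OF g(1) y] .
  moreover have "E1 x' (act g y)" using S_edge[OF g(1) x y e] g(2) by simp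
  moreover have "EOr x y = EOr x' (act g y)" using eo_move[OF g(1) x y] g(2) by simp
  ultimately show ?thesis by blast
qed

lemma nbr: "x \<in> V1 \<Longrightarrow> finite {w. E1 x w} \<and> card {w. E1 x w} = 4"
  using RT1 unfolding regular_tree_def by blast

lemma nbrV: "E1 x w \<Longrightarrow> w \<in> V1" using tree_edge[OF T1] by blast

lemma deg_l: "card {Q \<in> QE. lq Q = Ov} \<le> 4"
proof (cases "{Q \<in> QE. lq Q = Ov} = {}")
  case True
  then have "card {Q \<in> QE. lq Q = Ov} = 0" by (simp only: card.empty)
  then show ?thesis by simp
next
  case False
  then obtain Q0 where Q0: "Q0 \<in> QE" "lq Q0 = Ov" by blast
  obtain x0 y0 where n0: "x0 \<in> V1" "y0 \<in> V1" "E1 x0 y0" "c1 x0" "\<not> c1 y0" "Q0 = EOr x0 y0"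
    using QE_normal[OF Q0(1)] by blast
  have Ov: "Ov = Orb x0" using Q0(2) lr_normal n0 by blast
  have "{Q \<in> QE. lq Q = Ov} \<subseteq> (\<lambda>w. EOr x0 w) ` {w. E1 x0 w}"
  proof
    fix Q assume "Q \<in> {Q \<in> QE. lq Q = Ov}"
    then have Q: "Q \<in> QE" "lq Q = Ov" by blast+
    obtain x y where n: "x \<in> V1" "y \<in> V1" "E1 x y" "c1 x" "\<not> c1 y" "Q = EOr x y"
      using QE_normal[OF Q(1)] by blast
    have "Orb x = Orb x0" using Q(2) Ov lr_normal n by blast
    then obtain y' where "y' \<in> V1" "E1 x0 y'" "EOr x y = EOr x0 y'" using move[OF n(1) n0(1) _ n(2,3)] by metis
    then show "Q \<in> (\<lambda>w. EOr x0 w) ` {w. E1 x0 w}" using n(6) by blast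
  qed
  then have "card {Q \<in> QE. lq Q = Ov} \<le> card ((\<lambda>w. EOr x0 w) ` {w. E1 x0 w})"
    using nbr[OF n0(1)] by (intro card_mono) auto
  also have "\<dots> \<le> card {w. E1 x0 w}" using nbr[OF n0(1)] by (intro card_image_le) auto
  finally show ?thesis using nbr[OF n0(1)] by simp
qed

lemma deg_r: "card {Q \<in> QE. rq Q = Ov} \<le> 4"
proof (cases "{Q \<in> QE. rq Q = Ov} = {}")
  case True
  then have "card {Q \<in> QE. rq Q = Ov} = 0" by (simp only: card.empty)
  then show ?thesis by simp
next
  case False
  then obtain Q0 where Q0: "Q0 \<in> QE" "rq Q0 = Ov" by blast
  obtain x0 y0 where n0: "x0 \<in> V1" "y0 \<in> V1" "E1 x0 y0" "c1 x0" "\<not> c1 y0" "Q0 = EOr x0 y0"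
    using QE_normal[OF Q0(1)] by blast
  have Ov: "Ov = Orb y0" using Q0(2) lr_normal n0 by blast
  have "{Q \<in> QE. rq Q = Ov} \<subseteq> (\<lambda>w. EOr y0 w) ` {w. E1 y0 w}"
  proof
    fix Q assume "Q \<in> {Q \<in> QE. rq Q = Ov}"
    then have Q: "Q \<in> QE" "rq Q = Ov" by blast+
    obtain x y where n: "x \<in> V1" "y \<in> V1" "E1 x y" "c1 x" "\<not> c1 y" "Q = EOr x y"
      using QE_normal[OF Q(1)] by blast
    have "Orb y = Orb y0" using Q(2) Ov lr_normal n by blast
    moreover have "E1 y x" using tree_sym[OF T1 n(3)] .
    ultimately obtain x' where "x' \<in> V1" "E1 y0 x'" "EOr y x = EOr y0 x'" using move[OF n(2) n0(2) _ n(1)] by metis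
    then show "Q \<in> (\<lambda>w. EOr y0 w) ` {w. E1 y0 w}" using n(6) eo_sym by auto
  qed
  then have "card {Q \<in> QE. rq Q = Ov} \<le> card ((\<lambda>w. EOr y0 w) ` {w. E1 y0 w})"
    using nbr[OF n0(2)] by (intro card_mono) auto
  also have "\<dots> \<le> card {w. E1 y0 w}" using nbr[OF n0(2)] by (intro card_image_le) auto
  finally show ?thesis using nbr[OF n0(2)] by simp
qed

lemma orbs_finite: "finite (Orb ` V1)"
proof -
  obtain K where K: "finite K" "K \<subseteq> V1 \<times> V2" "V1 \<times> V2 = (\<Union>g\<in>H. g ` K)"
    using H_coc unfolding cocompact_def by blast
  define K2 where "K2 = {k \<in> K. \<exists>h\<in>H. snd (h k) = z0}"
  define gk where "gk k = (SOME h. h \<in> H \<and> snd (h k) = z0)" for k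
  have gk: "gk k \<in> H \<and> snd (gk k k) = z0" if k2: "k \<in> K2" for k
  proof -
    have "\<exists>h. h \<in> H \<and> snd (h k) = z0" using k2 unfolding K2_def by blast
    then show ?thesis unfolding gk_def by (rule someI_ex)
  qed
  have "Orb ` V1 \<subseteq> (\<lambda>k. Orb (fst (gk k k))) ` K2"
  proof
    fix Ox assume "Ox \<in> Orb ` V1"
    then obtain x where x: "x \<in> V1" "Ox = Orb x" by blast
    have "(x, z0) \<in> V1 \<times> V2" using x z0 by blast
    then have "(x, z0) \<in> (\<Union>g\<in>H. g ` K)" using K(3) by simp
    then obtain h k where hk: "h \<in> H" "k \<in> K" "(x, z0) = h k" by blast
    have "snd (h k) = z0" using hk(3)[symmetric] by simp
    then have kK2: "k \<in> K2" unfolding K2_def using hk(1,2) by blast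
    define g where "g = gk k"
    have g: "g \<in> H" "snd (g k) = z0" using gk[OF kK2] unfolding g_def by auto
    define a where "a = fst (g k)"
    have kV: "k \<in> V1 \<times> V2" using hk(2) K(2) by blast
    have gkV: "g k \<in> V1 \<times> V2" using bg_closed[OF HG[OF g(1)] kV] .
    have gka: "g k = (a, z0)" unfolding a_def using g(2) prod.collapse[of "g k"] by simp
    have aV: "a \<in> V1" using gkV gka by simp
    define s where "s = h \<otimes>\<^bsub>G\<^esub> inv\<^bsub>G\<^esub> g"
    have ig: "inv\<^bsub>G\<^esub> g \<in> H" using subgroup.m_inv_closed[OF Hsub g(1)] .
    have sH: "s \<in> H" unfolding s_def using subgroup.m_closed[OF Hsub hk(1) ig] .
    have "s (a, z0) = h ((inv\<^bsub>G\<^esub> g) (g k))" unfolding s_def using bg_mult[OF HG[OF hk(1)] HG[OF ig]] gka gkV by simp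
    also have "\<dots> = h k" using bg_inv2[OF HG[OF g(1)] kV] by simp
    finally have sa: "s (a, z0) = (x, z0)" using hk(3) by simp
    have sS: "s \<in> S" using stab_crit[OF sH aV] sa by simp
    have "x = act s a" unfolding act_def using sa by simp
    then have "x \<in> Orb a" unfolding O_def' using sS by blast
    then have "Orb x = Orb a" using orb_eq[OF aV] by blast
    then have "Ox = Orb (fst (gk k k))" using x(2) unfolding a_def g_def by simp
    then show "Ox \<in> (\<lambda>k. Orb (fst (gk k k))) ` K2" using kK2 by (rule image_eqI)
  qed
  moreover have "finite K2" unfolding K2_def using K(1) by simp
  ultimately show ?thesis using finite_subset by blast
qed

lemma QE_finite: "finite QE"
proof -
  define rep where "rep Ov = (SOME x. x \<in> V1 \<and> Ov = Orb x)" for Ov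
  have rep: "rep Ov \<in> V1 \<and> Ov = Orb (rep Ov)" if ov: "Ov \<in> Orb ` V1" for Ov
  proof -
    have "\<exists>x. x \<in> V1 \<and> Ov = Orb x" using ov by blast
    then show ?thesis unfolding rep_def by (rule someI_ex)
  qed
  have "QE \<subseteq> (\<Union>r\<in>rep ` (Orb ` V1). (\<lambda>w. EOr r w) ` {w. E1 r w})"
  proof
    fix Q assume "Q \<in> QE"
    then obtain x y where xy: "x \<in> V1" "y \<in> V1" "E1 x y" "Q = EOr x y"
      unfolding QE_def quotient_edges_def by blast
    have r: "rep (Orb x) \<in> V1" "Orb x = Orb (rep (Orb x))" using rep[of "Orb x"] xy(1) by blast+
    obtain y' where "y' \<in> V1" "E1 (rep (Orb x)) y'" "EOr x y = EOr (rep (Orb x)) y'"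
      using move[OF xy(1) r(1) r(2)[symmetric] xy(2,3)] by blast
    then show "Q \<in> (\<Union>r\<in>rep ` (Orb ` V1). (\<lambda>w. EOr r w) ` {w. E1 r w})" using xy(1,4) by blast
  qed
  moreover have "finite (\<Union>r\<in>rep ` (Orb ` V1). (\<lambda>w. EOr r w) ` {w. E1 r w})"
  proof (rule finite_UN_I)
    show "finite (rep ` (Orb ` V1))" using orbs_finite by simp
    fix r assume "r \<in> rep ` (Orb ` V1)"
    then have "r \<in> V1" using rep by blast
    then show "finite ((\<lambda>w. EOr r w) ` {w. E1 r w})" using nbr by simp
  qed
  ultimately show ?thesis using finite_subset by blast
qed

lemma labeling:
  "\<exists>lab :: 'v set set \<Rightarrow> wlabel. \<forall>e1\<in>QE. \<forall>e2\<in>QE.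
     e1 \<noteq> e2 \<and> share_vertex S z0 e1 e2 \<longrightarrow> lab e1 \<noteq> lab e2"
proof -
  have "\<forall>v. card {e\<in>QE. lq e = v} \<le> 4" using deg_l by blast
  moreover have "\<forall>v. card {e\<in>QE. rq e = v} \<le> 4" using deg_r by blast
  ultimately obtain col where col: "proper_col lq rq 4 QE col" using konig[OF QE_finite] by blast
  define lab where "lab Q = [w1, w2, w3, w4] ! col Q" for Q
  have "lab e1 \<noteq> lab e2" if e: "e1 \<in> QE" "e2 \<in> QE" "e1 \<noteq> e2" "share_vertex S z0 e1 e2" for e1 e2
  proof -
    have "lq e1 = lq e2 \<or> rq e1 = rq e2" using share_lr[OF e(1,2,4)] .
    then have "col e1 \<noteq> col e2" using col e(1-3) unfolding proper_col_def by blast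
    moreover have "col e1 < 4" "col e2 < 4" using col e(1,2) unfolding proper_col_def by blast+
    moreover have "distinct [w1, w2, w3, w4]" by simp
    ultimately show ?thesis unfolding lab_def using nth_eq_iff_index_eq[of "[w1, w2, w3, w4]" "col e1" "col e2"] by simp
  qed
  then show ?thesis by blast
qed

end

theorem lemma4p3:
  fixes V1 V2 :: "'v set" and E1 E2 :: "'v \<Rightarrow> 'v \<Rightarrow> bool"
    and L0 :: "('v \<times> 'v \<Rightarrow> 'v \<times> 'v) set"
  assumes "regular_tree V1 E1 4" and "regular_tree V2 E2 4"
    and "tp_lattice V1 E1 V2 E2 L0" and "cocompact V1 V2 L0"
    and "torsion_free (TPG V1 V2 L0)" and "irreducible_grp (TPG V1 V2 L0)"
    and "residually_finite (TPG V1 V2 L0)"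
  shows "\<exists>L z0. L \<subseteq> L0 \<and> finite_index (TPG V1 V2 L0) L \<and>
           tp_lattice V1 E1 V2 E2 L \<and> cocompact V1 V2 L \<and>
           torsion_free (TPG V1 V2 L) \<and> irreducible_grp (TPG V1 V2 L) \<and>
           (\<forall>f\<in>L. factor_preserving V1 E1 V2 E2 f) \<and> z0 \<in> V2 \<and>
           (\<forall>x\<in>V1. \<forall>y\<in>V1. E1 x y \<longrightarrow>
              slice_orbit (slice_stab V1 L z0) z0 x \<noteq> slice_orbit (slice_stab V1 L z0) z0 y) \<and>
           (\<exists>lab :: 'v set set \<Rightarrow> wlabel.
              \<forall>e1\<in>quotient_edges V1 E1 (slice_stab V1 L z0) z0.
              \<forall>e2\<in>quotient_edges V1 E1 (slice_stab V1 L z0) z0.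
                e1 \<noteq> e2 \<and> share_vertex (slice_stab V1 L z0) z0 e1 e2 \<longrightarrow> lab e1 \<noteq> lab e2)"
proof -
  have T1: "is_tree V1 E1" using assms(1) unfolding regular_tree_def by blast
  have T2: "is_tree V2 E2" using assms(2) unfolding regular_tree_def by blast
  obtain c1 :: "'v \<Rightarrow> bool" where c1: "\<forall>x y. E1 x y \<longrightarrow> c1 x \<noteq> c1 y" using tree_bipartite[OF T1] by blast
  obtain c2 :: "'v \<Rightarrow> bool" where c2: "\<forall>x y. E2 x y \<longrightarrow> c2 x \<noteq> c2 y" using tree_bipartite[OF T2] by blast
  obtain z0 where z0: "z0 \<in> V2" using tree_ne[OF T2] by blast
  interpret LS V1 V2 E1 E2 L0 c1 c2 z0
    using assms(1-4) c1 c2 z0 by unfold_locales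
  have SS: "slice_stab V1 H z0 = S" unfolding S_def ..
  have emb: "\<forall>x\<in>V1. \<forall>y\<in>V1. E1 x y \<longrightarrow>
              slice_orbit (slice_stab V1 H z0) z0 x \<noteq> slice_orbit (slice_stab V1 H z0) z0 y"
    unfolding SS using embedded by blast
  have lab: "\<exists>lab :: 'v set set \<Rightarrow> wlabel.
              \<forall>e1\<in>quotient_edges V1 E1 (slice_stab V1 H z0) z0.
              \<forall>e2\<in>quotient_edges V1 E1 (slice_stab V1 H z0) z0.
                e1 \<noteq> e2 \<and> share_vertex (slice_stab V1 H z0) z0 e1 e2 \<longrightarrow> lab e1 \<noteq> lab e2"
    unfolding SS using labeling unfolding QE_def .
  have fp: "\<forall>f\<in>H. factor_preserving V1 E1 V2 E2 f" using H_fp by blast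
  show ?thesis
    using H_L0 H_fi H_lat H_coc H_tf[OF assms(5)] H_irr[OF assms(6)] fp z0 emb lab by blast
qed

end
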